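(* The graph property $\mathsf{NON\text{-}3\text{-}COLORABLE}$ (the complement of $3\text{-}\mathsf{COLORABLE}$) does not belong to $\mathrm{NLP}$.
   Context: Graphs. All graphs are finite, nonempty, simple, undirected and connected, and labeled: a graph is a triple $G=(V(G),E(G),\lambda_G)$ with labeling $\lambda_G:V(G)\to\{0,1\}^*$. $\mathsf{GRAPH}$ is the set of all graphs. A graph property is a subset of $\mathsf{GRAPH}$ closed under label-preserving isomorphism. $N^G_r(u)$ denotes the subgraph of $G$ induced by the nodes at distance at most $r$ from $u$. $3\text{-}\mathsf{COLORABLE}$ is the set of graphs $G$ admitting $f:V(G)\to\{0,1,2\}$ with $f(u)\ne f(v)$ for every edge $\{u,v\}$ (labels irrelevant), and $\mathsf{NON\text{-}3\text{-}COLORABLE}=\mathsf{GRAPH}\setminus3\text{-}\mathsf{COLORABLE}$. Identifiers and certificates. An identifier assignment of $G$ is a map $\mathrm{id}:V(G)\to\{0,1\}^*$; it is $r$-locally unique if $\mathrm{id}(u)\neq\mathrm{id}(v)$ for all distinct nodes $u,v$ at distance at most $2r$. Identifiers are ordered lexicographically (a proper prefix is smaller). A certificate assignment is a map $\kappa:V(G)\to\{0,1\}^*$; for $r\in\mathbb N$ and $p:\mathbb N\to\mathbb N$ it is $(r,p)$-bounded (w.r.t. $(G,\mathrm{id})$) if $|\kappa(u)|\le p\big(\sum_{v\in N^G_r(u)}(1+|\lambda_G(v)|+|\mathrm{id}(v)|)\big)$ for every node $u$. Distributed Turing machines. Such a machine $M$ is a Turing machine with three one-way-infinite tapes (receiving,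 internal, sending) over the alphabet $\{\vdash,\square,\#,0,1\}$ (left-end marker, blank, separator, bits), with designated states start, pause, stop. It is executed on a graph $G$ under an (at least $1$-locally unique) identifier assignment $\mathrm{id}$ and a certificate assignment $\kappa$: every node runs its own copy of $M$ in synchronous rounds. In each round, a node $u$ whose neighbors are $v_1,\dots,v_d$ in increasing identifier order (i) gets $m_1\#\cdots\#m_d\#$ on its receiving tape, where $m_i$ is the message sent to it by $v_i$ in the previous round (empty in the first round); (ii) its sending tape is emptied, its internal tape is initialized to $\lambda_G(u)\#\mathrm{id}(u)\#\kappa(u)$ in the first round and otherwise keeps its content, and, unless $u$ reached stop in an earlier round, $M$ runs from state start with all heads leftmost until it enters pause or stop; (iii) $u$ sends to $v_i$ the $i$-th $\#$-separated bit string on its sending tape (the empty string if there is none). The execution terminates once all nodes are in stop; $G$ is accepted, written $M(G,\mathrm{id},\kappa)\equiv\mathrm{accept}$, if at that point every node has exactly the bit string $1$ on its internal tape (symbols other than $0,1$ ignored). A local-polynomial machine is a distributed Turing machine for which there are a constant $c$ and a polynomial $q$ such that, on every graph and under all identifier and certificate assignments, all nodes reach stop within $c$ rounds, and in every round every node makes at most $q(n)$ computation steps, $n$ being the total length of its receiving- and internal-tape contents at the beginning of the round. $\mathrm{NLP}$ is the class of graph properties $P$ for which there exist a local-polynomial machine $M$, constants $r_{\mathrm{id}},r\ge 1$ and a polynomial $p$ such that for every graph $G$ and every $r_{\mathrm{id}}$-locally unique identifier assignment $\mathrm{id}$ of $G$: $G\in P\iff\exists\kappa\,:\,M(G,\mathrm{id},\kappa)\equiv\mathrm{accept}$,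 $\kappa$ ranging over $(r,p)$-bounded certificate assignments of $(G,\mathrm{id})$. *)

theory Defs
  imports Main "HOL-Computational_Algebra.Polynomial"
begin

text \<open>Bit strings are bool lists (False = 0, True = 1).  Vertices are natural numbers
(every finite graph is isomorphic to one on natural numbers).\<close>

type_synonym bits = "bool list"

record graph =
  verts :: "nat set"
  edges :: "nat set set"
  label :: "nat \<Rightarrow> bits"

definition adj :: "graph \<Rightarrow> nat \<Rightarrow> nat \<Rightarrow> bool" where
  "adj G u v \<longleftrightarrow> {u, v} \<in> edges G"

definition walk :: "graph \<Rightarrow> nat list \<Rightarrow> bool" where
  "walk G xs \<longleftrightarrow> xs \<noteq> [] \<and> set xs \<subseteq> verts G \<and>
     (\<forall>i. Suc i < length xs \<longrightarrow> adj G (xs ! i) (xs ! Suc i))"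

definition dist_le :: "graph \<Rightarrow> nat \<Rightarrow> nat \<Rightarrow> nat \<Rightarrow> bool" where
  "dist_le G k u v \<longleftrightarrow> (\<exists>xs. walk G xs \<and> hd xs = u \<and> last xs = v \<and> length xs \<le> Suc k)"

definition is_graph :: "graph \<Rightarrow> bool" where
  "is_graph G \<longleftrightarrow> finite (verts G) \<and> verts G \<noteq> {} \<and>
     (\<forall>e\<in>edges G. \<exists>u v. u \<in> verts G \<and> v \<in> verts G \<and> u \<noteq> v \<and> e = {u, v}) \<and>
     (\<forall>u\<in>verts G. \<forall>v\<in>verts G. \<exists>xs. walk G xs \<and> hd xs = u \<and> last xs = v)"

definition GRAPH :: "graph set" where
  "GRAPH = {G. is_graph G}"

definition graph_iso :: "graph \<Rightarrow> graph \<Rightarrow> bool" where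
  "graph_iso G H \<longleftrightarrow> (\<exists>f. bij_betw f (verts G) (verts H) \<and>
     (\<forall>u\<in>verts G. \<forall>v\<in>verts G. {u, v} \<in> edges G \<longleftrightarrow> {f u, f v} \<in> edges H) \<and>
     (\<forall>u\<in>verts G. label H (f u) = label G u))"

definition graph_property :: "graph set \<Rightarrow> bool" where
  "graph_property P \<longleftrightarrow> P \<subseteq> GRAPH \<and>
     (\<forall>G H. G \<in> P \<and> H \<in> GRAPH \<and> graph_iso G H \<longrightarrow> H \<in> P)"

definition THREE_COLORABLE :: "graph set" where
  "THREE_COLORABLE = {G \<in> GRAPH. \<exists>f :: nat \<Rightarrow> nat.
     (\<forall>u\<in>verts G. f u \<in> {0, 1, 2}) \<and> (\<forall>u v. {u, v} \<in> edges G \<longrightarrow> f u \<noteq> f v)}"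

definition NON_THREE_COLORABLE :: "graph set" where
  "NON_THREE_COLORABLE = GRAPH - THREE_COLORABLE"

definition locally_unique :: "graph \<Rightarrow> nat \<Rightarrow> (nat \<Rightarrow> bits) \<Rightarrow> bool" where
  "locally_unique G r idf \<longleftrightarrow> (\<forall>u\<in>verts G. \<forall>v\<in>verts G.
     u \<noteq> v \<and> dist_le G (2 * r) u v \<longrightarrow> idf u \<noteq> idf v)"

text \<open>Lexicographic order on bit strings, a proper prefix being smaller.\<close>
definition id_less :: "bits \<Rightarrow> bits \<Rightarrow> bool" where
  "id_less a b \<longleftrightarrow> (a, b) \<in> lexord {(x, y). x < y}"

definition bounded_cert :: "graph \<Rightarrow> (nat \<Rightarrow> bits) \<Rightarrow> nat \<Rightarrow> nat poly \<Rightarrow> (nat \<Rightarrow> bits) \<Rightarrow> bool" where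
  "bounded_cert G idf r p \<kappa> \<longleftrightarrow> (\<forall>u\<in>verts G.
     length (\<kappa> u) \<le> poly p (\<Sum>v\<in>{v\<in>verts G. dist_le G r u v}.
        1 + length (label G v) + length (idf v)))"

datatype sym = LEnd | Blank | Sep | Zero | One

datatype move = MvL | MvS | MvR

type_synonym tape = "nat \<Rightarrow> sym"

record dtm =
  states :: "nat set"
  delta :: "nat \<Rightarrow> sym \<Rightarrow> sym \<Rightarrow> sym \<Rightarrow> nat \<times> sym \<times> sym \<times> sym \<times> move \<times> move \<times> move"
  start :: nat
  pause :: nat
  stop :: nat

definition wf_dtm :: "dtm \<Rightarrow> bool" where
  "wf_dtm M \<longleftrightarrow> finite (states M) \<and> start M \<in> states M \<and> pause M \<in> states M \<and>
     stop M \<in> states M \<and> start M \<noteq> pause M \<and> start M \<noteq> stop M \<and> pause M \<noteq> stop M \<and>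
     (\<forall>q\<in>states M. \<forall>a b c. fst (delta M q a b c) \<in> states M)"

definition bit_sym :: "bool \<Rightarrow> sym" where
  "bit_sym b = (if b then One else Zero)"

definition enc :: "bits \<Rightarrow> sym list" where
  "enc w = map bit_sym w"

fun bits_of :: "sym list \<Rightarrow> bits" where
  "bits_of [] = []"
| "bits_of (x # xs) = (if x = Zero then False # bits_of xs
                       else if x = One then True # bits_of xs else bits_of xs)"

definition tape_of :: "sym list \<Rightarrow> tape" where
  "tape_of w = (\<lambda>i. if i = 0 then LEnd else if i \<le> length w then w ! (i - 1) else Blank)"

definition tape_len :: "tape \<Rightarrow> nat" where
  "tape_len t = Max {i. t i \<noteq> Blank}"

definition content :: "tape \<Rightarrow> sym list" where
  "content t = map t [1..<Suc (tape_len t)]"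

fun split_sep :: "sym list \<Rightarrow> sym list list" where
  "split_sep [] = [[]]"
| "split_sep (x # xs) = (let r = split_sep xs in
     if x = Sep then [] # r else (x # hd r) # tl r)"

record cfg =
  cst :: nat
  rtape :: tape
  itape :: tape
  stape :: tape
  rhd :: nat
  ihd :: nat
  shd :: nat

definition write_cell :: "tape \<Rightarrow> nat \<Rightarrow> sym \<Rightarrow> tape" where
  "write_cell t h s = (if h = 0 then t else t(h := s))"

fun mv :: "move \<Rightarrow> nat \<Rightarrow> nat" where
  "mv MvL h = h - 1"
| "mv MvS h = h"
| "mv MvR h = Suc h"

definition step :: "dtm \<Rightarrow> cfg \<Rightarrow> cfg" where
  "step M c = (case delta M (cst c) (rtape c (rhd c)) (itape c (ihd c)) (stape c (shd c)) of
     (q', a, b, d, m1, m2, m3) \<Rightarrow>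
       \<lparr>cst = q', rtape = write_cell (rtape c) (rhd c) a,
        itape = write_cell (itape c) (ihd c) b, stape = write_cell (stape c) (shd c) d,
        rhd = mv m1 (rhd c), ihd = mv m2 (ihd c), shd = mv m3 (shd c)\<rparr>)"

definition halts_in :: "dtm \<Rightarrow> cfg \<Rightarrow> nat \<Rightarrow> cfg \<Rightarrow> bool" where
  "halts_in M c n c' \<longleftrightarrow> (step M ^^ n) c = c' \<and> cst c' \<in> {pause M, stop M} \<and>
     (\<forall>m<n. cst ((step M ^^ m) c) \<notin> {pause M, stop M})"

definition run_round :: "dtm \<Rightarrow> cfg \<Rightarrow> cfg option" where
  "run_round M c = (if \<exists>n c'. halts_in M c n c'
     then Some (THE c'. \<exists>n. halts_in M c n c') else None)"

definition nbr_list :: "graph \<Rightarrow> (nat \<Rightarrow> bits) \<Rightarrow> nat \<Rightarrow> nat list" where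
  "nbr_list G idf u = (THE ns. distinct ns \<and> set ns = {v\<in>verts G. adj G u v} \<and>
     sorted_wrt (\<lambda>a b. id_less (idf a) (idf b)) ns)"

text \<open>Node state between rounds: (has stopped, internal tape, sending tape).\<close>
type_synonym nstate = "bool \<times> tape \<times> tape"

definition message :: "graph \<Rightarrow> (nat \<Rightarrow> bits) \<Rightarrow> nat \<Rightarrow> tape \<Rightarrow> nat \<Rightarrow> bits" where
  "message G idf v s u = (let ns = nbr_list G idf v; ps = split_sep (content s);
       i = (THE i. i < length ns \<and> ns ! i = u)
     in if i < length ps then bits_of (ps ! i) else [])"

definition received :: "graph \<Rightarrow> (nat \<Rightarrow> bits) \<Rightarrow> (nat \<Rightarrow> nstate) \<Rightarrow> nat \<Rightarrow> sym list" where
  "received G idf S u = concat (map (\<lambda>v. enc (message G idf v (snd (snd (S v))) u) @ [Sep])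
     (nbr_list G idf u))"

definition empty_tape :: tape where
  "empty_tape = tape_of []"

definition round_cfg :: "dtm \<Rightarrow> graph \<Rightarrow> (nat \<Rightarrow> bits) \<Rightarrow> (nat \<Rightarrow> nstate) \<Rightarrow> nat \<Rightarrow> cfg" where
  "round_cfg M G idf S u = \<lparr>cst = start M, rtape = tape_of (received G idf S u),
     itape = fst (snd (S u)), stape = empty_tape, rhd = 0, ihd = 0, shd = 0\<rparr>"

definition node_round :: "dtm \<Rightarrow> graph \<Rightarrow> (nat \<Rightarrow> bits) \<Rightarrow> (nat \<Rightarrow> nstate) \<Rightarrow> nat \<Rightarrow> nstate option" where
  "node_round M G idf S u = (if fst (S u) then Some (True, fst (snd (S u)), empty_tape)
     else map_option (\<lambda>c'. (cst c' = stop M, itape c', stape c')) (run_round M (round_cfg M G idf S u)))"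

definition init_state :: "graph \<Rightarrow> (nat \<Rightarrow> bits) \<Rightarrow> (nat \<Rightarrow> bits) \<Rightarrow> nat \<Rightarrow> nstate" where
  "init_state G idf \<kappa> u = (False,
     tape_of (enc (label G u) @ [Sep] @ enc (idf u) @ [Sep] @ enc (\<kappa> u)), empty_tape)"

text \<open>Global state after k rounds (None if some node's computation in some round never
reaches pause or stop).\<close>
fun exec :: "dtm \<Rightarrow> graph \<Rightarrow> (nat \<Rightarrow> bits) \<Rightarrow> (nat \<Rightarrow> bits) \<Rightarrow> nat \<Rightarrow> (nat \<Rightarrow> nstate) option" where
  "exec M G idf \<kappa> 0 = Some (init_state G idf \<kappa>)"
| "exec M G idf \<kappa> (Suc k) = (case exec M G idf \<kappa> k of None \<Rightarrow> None
     | Some S \<Rightarrow> if (\<forall>u\<in>verts G. node_round M G idf S u \<noteq> None)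
         then Some (\<lambda>u. if u \<in> verts G then the (node_round M G idf S u) else S u)
         else None)"

definition accepts :: "dtm \<Rightarrow> graph \<Rightarrow> (nat \<Rightarrow> bits) \<Rightarrow> (nat \<Rightarrow> bits) \<Rightarrow> bool" where
  "accepts M G idf \<kappa> \<longleftrightarrow> (\<exists>k S. exec M G idf \<kappa> k = Some S \<and>
     (\<forall>u\<in>verts G. fst (S u)) \<and>
     (\<forall>u\<in>verts G. bits_of (content (fst (snd (S u)))) = [True]))"

definition local_polynomial :: "dtm \<Rightarrow> bool" where
  "local_polynomial M \<longleftrightarrow> wf_dtm M \<and> (\<exists>(c::nat) (q::nat poly). \<forall>G idf \<kappa>.
     is_graph G \<and> locally_unique G 1 idf \<longrightarrow>
       (\<exists>S. exec M G idf \<kappa> c = Some S \<and> (\<forall>u\<in>verts G. fst (S u))) \<and>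
       (\<forall>k S. exec M G idf \<kappa> k = Some S \<longrightarrow> (\<forall>u\<in>verts G. \<not> fst (S u) \<longrightarrow>
          (\<exists>n c'. halts_in M (round_cfg M G idf S u) n c' \<and>
             n \<le> poly q (length (received G idf S u) + tape_len (fst (snd (S u))))))))"

definition NLP :: "graph set set" where
  "NLP = {P. graph_property P \<and> (\<exists>M r_id r (p::nat poly). local_polynomial M \<and>
     r_id \<ge> 1 \<and> r \<ge> 1 \<and> (\<forall>G idf. is_graph G \<and> locally_unique G r_id idf \<longrightarrow>
       (G \<in> P \<longleftrightarrow> (\<exists>\<kappa>. bounded_cert G idf r p \<kappa> \<and> accepts M G idf \<kappa>))))}"

end

theory Submission
  imports Defs "HOL-Computational_Algebra.Polynomial"
begin

definition sc :: "nat \<Rightarrow> nat \<Rightarrow> nat" where "sc m u = (if Suc u < m then Suc u else 0)"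
definition pd :: "nat \<Rightarrow> nat \<Rightarrow> nat" where "pd m u = (if u = 0 then m - 1 else u - 1)"

definition sqc :: "nat \<Rightarrow> graph" where
  "sqc m = \<lparr>verts = {..<m}, edges = {{u, sc m u} | u. u < m} \<union> {{u, sc m (sc m u)} | u. u < m},
     label = (\<lambda>_. [])\<rparr>"

lemma sqc_simps[simp]: "verts (sqc m) = {..<m}" "label (sqc m) = (\<lambda>_. [])"
  by (simp_all add: sqc_def)

lemma sc_lt: "0 < m \<Longrightarrow> sc m u < m" by (simp add: sc_def)
lemma pd_lt: "u < m \<Longrightarrow> pd m u < m" by (auto simp: pd_def)
lemma pd_sc: "u < m \<Longrightarrow> pd m (sc m u) = u" by (auto simp: pd_def sc_def)
lemma sc_pd: "u < m \<Longrightarrow> sc m (pd m u) = u" by (auto simp: pd_def sc_def)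

lemma adj_sqc0: "adj (sqc m) u v \<longleftrightarrow> (\<exists>a<m. (u = a \<and> v = sc m a) \<or> (v = a \<and> u = sc m a)
   \<or> (u = a \<and> v = sc m (sc m a)) \<or> (v = a \<and> u = sc m (sc m a)))"
  unfolding adj_def sqc_def by (auto simp: doubleton_eq_iff)

lemma adj_sqc: assumes "m \<ge> 5"
  shows "adj (sqc m) u v \<longleftrightarrow> u < m \<and> v < m \<and> v \<in> {sc m u, sc m (sc m u), pd m u, pd m (pd m u)}"
proof
  assume "adj (sqc m) u v"
  then obtain a where "a<m" "(u = a \<and> v = sc m a) \<or> (v = a \<and> u = sc m a)
   \<or> (u = a \<and> v = sc m (sc m a)) \<or> (v = a \<and> u = sc m (sc m a))" unfolding adj_sqc0 by blast
  then show "u < m \<and> v < m \<and> v \<in> {sc m u, sc m (sc m u), pd m u, pd m (pd m u)}"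
    using assms by (auto simp: sc_lt pd_sc)
next
  assume "u < m \<and> v < m \<and> v \<in> {sc m u, sc m (sc m u), pd m u, pd m (pd m u)}"
  then show "adj (sqc m) u v" unfolding adj_sqc0
    using assms by (auto simp: sc_lt pd_lt sc_pd)
qed


lemma walk_single[simp]: "walk G [x] \<longleftrightarrow> x \<in> verts G" by (simp add: walk_def)

lemma walk_Cons2: "walk G (x # y # zs) \<longleftrightarrow> x \<in> verts G \<and> adj G x y \<and> walk G (y # zs)"
proof
  assume w: "walk G (x # y # zs)"
  have a: "adj G ((x # y # zs) ! i) ((x # y # zs) ! Suc i)" if "Suc i < length (x # y # zs)" for i
    using w that unfolding walk_def by blast
  show "x \<in> verts G \<and> adj G x y \<and> walk G (y # zs)"
  proof (intro conjI)
    show "x \<in> verts G" using w by (simp add: walk_def)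
    show "adj G x y" using a[of 0] by simp
    show "walk G (y # zs)" unfolding walk_def
    proof (intro conjI allI impI)
      show "set (y # zs) \<subseteq> verts G" using w by (simp add: walk_def)
      fix i assume "Suc i < length (y # zs)"
      then show "adj G ((y # zs) ! i) ((y # zs) ! Suc i)" using a[of "Suc i"] by simp
    qed simp
  qed
next
  assume h: "x \<in> verts G \<and> adj G x y \<and> walk G (y # zs)"
  show "walk G (x # y # zs)" unfolding walk_def
  proof (intro conjI allI impI)
    show "set (x # y # zs) \<subseteq> verts G" using h by (auto simp: walk_def)
    fix i assume i: "Suc i < length (x # y # zs)"
    show "adj G ((x # y # zs) ! i) ((x # y # zs) ! Suc i)"
    proof (cases i)
      case 0 then show ?thesis using h by simp
    next
      case (Suc j) then show ?thesis using h i unfolding walk_def by simp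
    qed
  qed simp
qed

lemma adj_sym: "adj G x y \<Longrightarrow> adj G y x" by (simp add: adj_def insert_commute)

lemma walk_rev: assumes "walk G xs" shows "walk G (rev xs)"
  unfolding walk_def
proof (intro conjI allI impI)
  show "rev xs \<noteq> []" "set (rev xs) \<subseteq> verts G" using assms by (auto simp: walk_def)
  fix i assume i: "Suc i < length (rev xs)"
  define j where "j = length xs - 2 - i"
  have j: "Suc j < length xs" "rev xs ! i = xs ! Suc j" "rev xs ! Suc i = xs ! j"
    using i by (auto simp: j_def rev_nth Suc_diff_Suc numeral_2_eq_2)
  show "adj G (rev xs ! i) (rev xs ! Suc i)" using assms j unfolding walk_def by (simp add: adj_sym)
qed
lemma walk_upt: assumes "a \<le> b" "{a..b} \<subseteq> verts G" "\<And>i. a \<le> i \<Longrightarrow> i < b \<Longrightarrow> adj G i (Suc i)"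
  shows "walk G [a..<Suc b]"
  unfolding walk_def using assms by (auto simp del: upt_Suc simp: nth_upt)

lemma sqc_adj_Suc: "5 \<le> m \<Longrightarrow> Suc i < m \<Longrightarrow> adj (sqc m) i (Suc i)"
  by (simp add: adj_sqc sc_def)

lemma sqc_conn: assumes "5 \<le> m" "u < m" "v < m"
  shows "\<exists>xs. walk (sqc m) xs \<and> hd xs = u \<and> last xs = v"
proof (cases "u \<le> v")
  case True
  have "walk (sqc m) [u..<Suc v]" using assms True by (intro walk_upt) (auto intro: sqc_adj_Suc)
  then show ?thesis using True by (intro exI[of _ "[u..<Suc v]"]) (simp del: upt_Suc add: hd_upt)
next
  case False
  have "walk (sqc m) [v..<Suc u]" using assms False by (intro walk_upt) (auto intro: sqc_adj_Suc)
  then have "walk (sqc m) (rev [v..<Suc u])" by (rule walk_rev)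
  then show ?thesis using False by (intro exI[of _ "rev [v..<Suc u]"]) (simp del: upt_Suc add: hd_rev last_rev hd_upt)
qed

lemma is_graph_sqc: assumes "5 \<le> m" shows "is_graph (sqc m)"
  unfolding is_graph_def
proof (intro conjI ballI)
  show "finite (verts (sqc m))" by simp
  have "0 \<in> verts (sqc m)" using assms by simp
  then show "verts (sqc m) \<noteq> {}" by blast
  fix e assume "e \<in> edges (sqc m)"
  then obtain a where a: "a < m" "e = {a, sc m a} \<or> e = {a, sc m (sc m a)}" by (auto simp: sqc_def)
  from a(2) show "\<exists>u v. u \<in> verts (sqc m) \<and> v \<in> verts (sqc m) \<and> u \<noteq> v \<and> e = {u, v}"
  proof
    assume e: "e = {a, sc m a}"
    have "sc m a < m" "a \<noteq> sc m a" using assms a(1) by (auto simp: sc_def)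
    then show ?thesis using e a(1) by auto
  next
    assume e: "e = {a, sc m (sc m a)}"
    have "sc m (sc m a) < m" "a \<noteq> sc m (sc m a)" using assms a(1) by (auto simp: sc_def)
    then show ?thesis using e a(1) by auto
  qed
next
  fix u v assume "u \<in> verts (sqc m)" "v \<in> verts (sqc m)"
  then show "\<exists>xs. walk (sqc m) xs \<and> hd xs = u \<and> last xs = v" using sqc_conn[OF assms] by auto
qed

lemma edge_sqc: "{u, v} \<in> edges (sqc m) \<longleftrightarrow> adj (sqc m) u v" by (simp add: adj_def)

lemma col3: "a < 3*n \<Longrightarrow> sc (3*n) a mod 3 \<noteq> a mod 3 \<and> sc (3*n) (sc (3*n) a) mod 3 \<noteq> a mod 3"
  unfolding sc_def by (simp split: if_splits; presburger)

lemma sqc3_col: assumes "5 \<le> 3*n" shows "sqc (3*n) \<in> THREE_COLORABLE"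
  unfolding THREE_COLORABLE_def GRAPH_def
proof (intro CollectI conjI exI[of _ "\<lambda>x. x mod 3"] ballI allI impI)
  show "is_graph (sqc (3*n))" using assms by (rule is_graph_sqc)
  fix u show "u mod 3 \<in> {0,1,2::nat}" by auto
next
  fix u v assume "{u, v} \<in> edges (sqc (3*n))"
  then obtain a where "a<3*n" "(u = a \<and> v = sc (3*n) a) \<or> (v = a \<and> u = sc (3*n) a)
   \<or> (u = a \<and> v = sc (3*n) (sc (3*n) a)) \<or> (v = a \<and> u = sc (3*n) (sc (3*n) a))"
    unfolding edge_sqc adj_sqc0 by blast
  then show "u mod 3 \<noteq> v mod 3" using col3 by metis
qed

lemma sqc_noncol: assumes "n = 3*k+1" "2 \<le> k" shows "sqc n \<notin> THREE_COLORABLE"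
proof
  assume "sqc n \<in> THREE_COLORABLE"
  then obtain f :: "nat \<Rightarrow> nat" where f: "\<forall>u\<in>verts (sqc n). f u \<in> {0,1,2}"
    "\<forall>u v. {u,v} \<in> edges (sqc n) \<longrightarrow> f u \<noteq> f v" unfolding THREE_COLORABLE_def by blast
  have n5: "5 \<le> n" using assms by simp
  have e1: "f i \<noteq> f (Suc i)" if "Suc i < n" for i
    using f(2) that n5 by (simp add: edge_sqc adj_sqc sc_def)
  have e2: "f i \<noteq> f (Suc (Suc i))" if "Suc (Suc i) < n" for i
    using f(2) that n5 by (simp add: edge_sqc adj_sqc sc_def)
  have p3: "f (Suc (Suc (Suc i))) = f i" if "Suc (Suc (Suc i)) < n" for i
  proof -
    have "f i \<in> {0,1,2}" "f (Suc i) \<in> {0,1,2}" "f (Suc (Suc i)) \<in> {0,1,2}" "f (Suc (Suc (Suc i))) \<in> {0,1,2}"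
      using f(1) that by auto
    moreover have "f i \<noteq> f (Suc i)" "f i \<noteq> f (Suc (Suc i))" "f (Suc i) \<noteq> f (Suc (Suc i))"
      "f (Suc i) \<noteq> f (Suc (Suc (Suc i)))" "f (Suc (Suc i)) \<noteq> f (Suc (Suc (Suc i)))"
      using e1[of i] e1[of "Suc i"] e1[of "Suc (Suc i)"] e2[of i] e2[of "Suc i"] that by auto
    ultimately show ?thesis by auto
  qed
  have "f (3*j) = f 0" if "3*j < n" for j using that
  proof (induction j)
    case (Suc j) then show ?case using p3[of "3*j"] by (simp add: numeral_3_eq_3)
  qed simp
  then have "f (n - 1) = f 0" using assms by simp
  moreover have "f (n - 1) \<noteq> f 0"
    using f(2) n5 by (auto simp: edge_sqc adj_sqc sc_def)
  ultimately show False by simp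
qed


definition pr :: "nat \<Rightarrow> nat \<Rightarrow> nat" where
  "pr n x = (if x < n then x else if x < 2*n then x - n else x - 2*n)"

lemma pr_lt: "u < 3*n \<Longrightarrow> pr n u < n" by (auto simp: pr_def)
lemma pr_sc: "5 \<le> n \<Longrightarrow> u < 3*n \<Longrightarrow> pr n (sc (3*n) u) = sc n (pr n u)"
  by (auto simp: pr_def sc_def)
lemma pr_pd: "5 \<le> n \<Longrightarrow> u < 3*n \<Longrightarrow> pr n (pd (3*n) u) = pd n (pr n u)"
  by (auto simp: pr_def pd_def)

definition nb :: "nat \<Rightarrow> nat \<Rightarrow> nat set" where
  "nb m u = {sc m u, sc m (sc m u), pd m u, pd m (pd m u)}"

lemma nb_card: "5 \<le> m \<Longrightarrow> u < m \<Longrightarrow> card (nb m u) = 4"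
proof -
  assume a: "5 \<le> m" "u < m"
  have "sc m u \<noteq> sc m (sc m u)" "sc m u \<noteq> pd m u" "sc m u \<noteq> pd m (pd m u)"
    "sc m (sc m u) \<noteq> pd m u" "sc m (sc m u) \<noteq> pd m (pd m u)" "pd m u \<noteq> pd m (pd m u)"
    using a unfolding sc_def pd_def by auto
  then show ?thesis unfolding nb_def by simp
qed

lemma nbrs_sqc: "5 \<le> m \<Longrightarrow> u < m \<Longrightarrow> {v \<in> verts (sqc m). adj (sqc m) u v} = nb m u"
  using sc_lt[of m] pd_lt[of _ m] by (auto simp: adj_sqc nb_def)

lemma pr_nb: "5 \<le> n \<Longrightarrow> u < 3*n \<Longrightarrow> pr n ` nb (3*n) u = nb n (pr n u)"
proof -
  assume a: "5 \<le> n" "u < 3*n"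
  have l: "sc (3*n) u < 3*n" "pd (3*n) u < 3*n" using a sc_lt[of "3*n"] pd_lt by auto
  show ?thesis unfolding nb_def using a l by (simp add: pr_sc pr_pd)
qed

lemma pr_bij: assumes "5 \<le> n" "u < 3*n"
  shows "bij_betw (pr n) (nb (3*n) u) (nb n (pr n u))"
proof -
  have "card (pr n ` nb (3*n) u) = card (nb (3*n) u)"
    using pr_nb[OF assms] nb_card[of n "pr n u"] nb_card[of "3*n" u] assms pr_lt by simp
  then have "inj_on (pr n) (nb (3*n) u)" by (intro eq_card_imp_inj_on) (simp add: nb_def)
  then show ?thesis using pr_nb[OF assms] by (simp add: bij_betw_def)
qed

lemma disp_step: assumes "u < m" "v \<in> nb m u" "5 \<le> m"
  shows "\<exists>s::int. \<bar>s\<bar> \<le> 2 \<and> int m dvd (int v - int u - s)"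
proof -
  have "\<exists>s::int. \<bar>s\<bar> \<le> 2 \<and> (int v - int u - s = 0 \<or> int v - int u - s = - int m \<or> int v - int u - s = int m)"
  proof -
    have "v = sc m u \<or> v = sc m (sc m u) \<or> v = pd m u \<or> v = pd m (pd m u)" using assms(2) by (simp add: nb_def)
    moreover have "v = sc m u \<Longrightarrow> int v - int u - 1 = 0 \<or> int v - int u - 1 = - int m"
      using assms(1) unfolding sc_def by (cases "Suc u < m") simp_all
    moreover have "v = sc m (sc m u) \<Longrightarrow> int v - int u - 2 = 0 \<or> int v - int u - 2 = - int m"
      using assms(1) unfolding sc_def by (cases "Suc u < m"; cases "Suc (Suc u) < m") (use assms(3) in simp_all)
    moreover have "v = pd m u \<Longrightarrow> int v - int u + 1 = 0 \<or> int v - int u + 1 = int m"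
      using assms(1) unfolding pd_def by (cases "u = 0") simp_all
    moreover have "v = pd m (pd m u) \<Longrightarrow> int v - int u + 2 = 0 \<or> int v - int u + 2 = int m"
      using assms(1) unfolding pd_def by (cases "u = 0"; cases "u = 1") (use assms(3) in simp_all)
    ultimately show ?thesis by (metis abs_minus_cancel abs_one diff_minus_eq_add abs_numeral order_refl one_le_numeral)
  qed
  then show ?thesis by (metis dvd_0_right dvd_minus_iff dvd_refl)
qed

lemma walk_disp: assumes "5 \<le> m" "walk (sqc m) xs"
  shows "\<exists>t::int. \<bar>t\<bar> \<le> 2 * int (length xs - 1) \<and> int m dvd (int (last xs) - int (hd xs) - t)"
  using assms(2)
proof (induction xs rule: induct_list012)
  case 1 then show ?case by (simp add: walk_def)
next
  case (2 x) then show ?case by (intro exI[of _ 0]) simp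
next
  case (3 x y zs)
  then have w: "x \<in> verts (sqc m)" "adj (sqc m) x y" "walk (sqc m) (y # zs)" by (simp_all add: walk_Cons2)
  obtain t where t: "\<bar>t\<bar> \<le> 2 * int (length (y # zs) - 1)" "int m dvd (int (last (y # zs)) - int y - t)"
    using 3(2)[OF w(3)] by auto
  have "y \<in> nb m x" "x < m" using w assms(1) by (auto simp: adj_sqc nb_def)
  then obtain s where s: "\<bar>s\<bar> \<le> 2" "int m dvd (int y - int x - s)" using disp_step assms(1) by blast
  have "int m dvd ((int (last (y # zs)) - int y - t) + (int y - int x - s))" using t(2) s(2) by (rule dvd_add)
  moreover have "int (last (x # y # zs)) - int (hd (x # y # zs)) - (t + s) = (int (last (y # zs)) - int y - t) + (int y - int x - s)"
    by simp
  ultimately have "int m dvd (int (last (x # y # zs)) - int (hd (x # y # zs)) - (t + s))" by metis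
  moreover have "\<bar>t + s\<bar> \<le> 2 * int (length (x # y # zs) - 1)" using t(1) s(1) by simp
  ultimately show ?case by blast
qed

lemma pr_eq: assumes "u < 3*n" "v < 3*n" "pr n u = pr n v"
  shows "v = u + n \<or> v = u + 2*n \<or> u = v + n \<or> u = v + 2*n \<or> u = v"
  using assms unfolding pr_def by (simp split: if_splits; linarith)

lemma fiber_sep: assumes "5 \<le> n" "u < 3*n" "v < 3*n" "u \<noteq> v" "pr n u = pr n v"
  "\<bar>t\<bar> < int n" shows "\<not> int (3*n) dvd (int v - int u - t)"
proof
  assume d: "int (3*n) dvd (int v - int u - t)"
  have "int v - int u = int n \<or> int v - int u = - int n \<or> int v - int u = 2 * int n \<or> int v - int u = - 2 * int n"
    using pr_eq[OF assms(2,3,5)] assms(4) by auto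
  then have "int v - int u - t \<noteq> 0" "\<bar>int v - int u - t\<bar> < int (3*n)" using assms(6) by linarith+
  moreover have "\<bar>int (3*n)\<bar> \<le> \<bar>int v - int u - t\<bar>" using dvd_imp_le_int[OF calculation(1) d] .
  ultimately show False by simp
qed

lemma sqc_H_unique: assumes "5 \<le> n" "u < 3*n" "v < 3*n" "u \<noteq> v" "pr n u = pr n v"
  "dist_le (sqc (3*n)) k u v" "2 * k < n"
  shows False
proof -
  obtain xs where xs: "walk (sqc (3*n)) xs" "hd xs = u" "last xs = v" "length xs \<le> Suc k"
    using assms(6) unfolding dist_le_def by blast
  obtain t where t: "\<bar>t\<bar> \<le> 2 * int (length xs - 1)" "int (3*n) dvd (int v - int u - t)"
    using walk_disp[OF _ xs(1)] assms(1) xs(2,3) by fastforce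
  have "\<bar>t\<bar> < int n" using t(1) xs(4) assms(7) by linarith
  then show False using fiber_sep[OF assms(1-5)] t(2) by blast
qed

definition rid :: "nat \<Rightarrow> bits" where "rid g = replicate g True"

lemma rid_less[simp]: "id_less (rid a) (rid b) \<longleftrightarrow> a < b"
  unfolding id_less_def rid_def
proof (induction a arbitrary: b)
  case 0 then show ?case by (cases b) auto
next
  case (Suc a) then show ?case by (cases b) auto
qed

lemma rid_inj[simp]: "rid a = rid b \<longleftrightarrow> a = b" by (simp add: rid_def)

lemma unique_sorted:
  fixes f :: "nat \<Rightarrow> nat"
  assumes "sorted_wrt (\<lambda>a b. f a < f b) xs" "sorted_wrt (\<lambda>a b. f a < f b) ys" "set xs = set ys"
  shows "xs = ys"
proof -
  have s: "sorted_wrt (<) (map f xs)" "sorted_wrt (<) (map f ys)" using assms(1,2) by (simp_all add: sorted_wrt_map)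
  then have "map f xs = map f ys" using assms(3) by (intro strict_sorted_equal) auto
  moreover have "inj_on f (set xs)" using s(1) by (simp add: strict_sorted_iff distinct_map)
  ultimately show ?thesis using assms(3) by (simp add: inj_on_map_eq_map)
qed

lemma exists_sorted:
  fixes f :: "nat \<Rightarrow> nat"
  assumes "finite A" "inj_on f A"
  shows "\<exists>xs. distinct xs \<and> set xs = A \<and> sorted_wrt (\<lambda>a b. f a < f b) xs"
proof -
  define ys where "ys = sorted_list_of_set (f ` A)"
  define g where "g = the_inv_into A f"
  have ys: "sorted_wrt (<) ys" "distinct ys" "set ys = f ` A" using assms(1)
    by (simp_all add: ys_def strict_sorted_list_of_set)
  have fg: "f (g a) = a" if "a \<in> f ` A" for a using that assms(2) by (simp add: g_def f_the_inv_into_f)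
  have gf: "g ` f ` A = A" using assms(2) by (simp add: g_def image_image the_inv_into_f_f)
  have "distinct (map g ys)" using ys(2,3) assms(2) by (simp add: distinct_map g_def inj_on_the_inv_into)
  moreover have "set (map g ys) = A" using ys(3) gf by simp
  moreover have "sorted_wrt (\<lambda>a b. f a < f b) (map g ys)"
    unfolding sorted_wrt_map by (rule sorted_wrt_mono_rel[OF _ ys(1)]) (simp add: fg ys(3))
  ultimately show ?thesis by blast
qed

lemma nbr_list_prop:
  fixes f :: "nat \<Rightarrow> nat"
  assumes "finite (verts X)" "inj_on f {v \<in> verts X. adj X x v}"
    "\<And>a b. id_less (idX a) (idX b) \<longleftrightarrow> f a < f b"
  shows "distinct (nbr_list X idX x) \<and> set (nbr_list X idX x) = {v \<in> verts X. adj X x v} \<and>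
     sorted_wrt (\<lambda>a b. f a < f b) (nbr_list X idX x)"
proof -
  let ?P = "\<lambda>ns. distinct ns \<and> set ns = {v \<in> verts X. adj X x v} \<and> sorted_wrt (\<lambda>a b. f a < f b) ns"
  have e: "nbr_list X idX x = (THE ns. ?P ns)" unfolding nbr_list_def assms(3) ..
  obtain ns where ns: "?P ns" using exists_sorted[OF _ assms(2)] assms(1) by auto
  have "?P (THE ns. ?P ns)"
    by (rule theI[of ?P ns]) (use ns unique_sorted in blast)+
  then show ?thesis unfolding e .
qed

lemma the_idx: "distinct xs \<Longrightarrow> i < length xs \<Longrightarrow> (THE j. j < length xs \<and> xs ! j = xs ! i) = i"
  by (intro the_equality) (auto simp: nth_eq_iff_index_eq)

locale cover =
  fixes G H :: graph and \<pi> :: "nat \<Rightarrow> nat"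
  assumes finG: "finite (verts G)" and finH: "finite (verts H)"
    and A1: "\<And>u. u \<in> verts H \<Longrightarrow> \<pi> u \<in> verts G"
    and A2: "\<And>u. u \<in> verts H \<Longrightarrow> bij_betw \<pi> {v \<in> verts H. adj H u v} {w \<in> verts G. adj G (\<pi> u) w}"
    and A3: "\<And>u. u \<in> verts H \<Longrightarrow> label H u = label G (\<pi> u)"
begin

abbreviation "idH \<equiv> (\<lambda>u. rid (\<pi> u))"

lemma nbrG: "distinct (nbr_list G rid g) \<and> set (nbr_list G rid g) = {v \<in> verts G. adj G g v} \<and>
     sorted_wrt (\<lambda>a b. id a < id b) (nbr_list G rid g)"
  by (rule nbr_list_prop[OF finG]) auto

lemma nbrH: assumes "u \<in> verts H"
  shows "distinct (nbr_list H idH u) \<and> set (nbr_list H idH u) = {v \<in> verts H. adj H u v} \<and>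
     map \<pi> (nbr_list H idH u) = nbr_list G rid (\<pi> u)"
proof -
  have inj: "inj_on \<pi> {v \<in> verts H. adj H u v}" using A2[OF assms] by (simp add: bij_betw_def)
  have p: "distinct (nbr_list H idH u) \<and> set (nbr_list H idH u) = {v \<in> verts H. adj H u v} \<and>
     sorted_wrt (\<lambda>a b. \<pi> a < \<pi> b) (nbr_list H idH u)"
    by (rule nbr_list_prop[OF finH inj]) simp
  have "sorted_wrt (\<lambda>a b. id a < id b) (map \<pi> (nbr_list H idH u))" using p by (simp add: sorted_wrt_map)
  moreover have "set (map \<pi> (nbr_list H idH u)) = set (nbr_list G rid (\<pi> u))"
    using p nbrG A2[OF assms] by (simp add: bij_betw_def)
  ultimately have "map \<pi> (nbr_list H idH u) = nbr_list G rid (\<pi> u)"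
    using nbrG by (intro unique_sorted[of id]) auto
  then show ?thesis using p by simp
qed

lemma msg: assumes "v \<in> verts H" "u \<in> verts H" "adj H v u"
  shows "message H idH v s u = message G rid (\<pi> v) s (\<pi> u)"
proof -
  let ?ns = "nbr_list H idH v"
  have n: "distinct ?ns" "set ?ns = {w \<in> verts H. adj H v w}" "map \<pi> ?ns = nbr_list G rid (\<pi> v)"
    using nbrH[OF assms(1)] by auto
  have dG: "distinct (map \<pi> ?ns)" using n(3) nbrG by metis
  have "u \<in> set ?ns" using n(2) assms by simp
  then obtain i where i: "i < length ?ns" "?ns ! i = u" by (auto simp: in_set_conv_nth)
  have t1: "(THE i. i < length ?ns \<and> ?ns ! i = u) = i"
    using the_idx[OF n(1) i(1)] i(2) by simp
  have t2: "(THE i. i < length (map \<pi> ?ns) \<and> map \<pi> ?ns ! i = \<pi> u) = i"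
    using the_idx[OF dG, of i] i by simp
  show ?thesis unfolding message_def Let_def n(3)[symmetric] t1 t2 ..
qed

lemma recv: assumes "u \<in> verts H" "\<forall>v\<in>verts H. adj H u v \<longrightarrow> SH v = S (\<pi> v)"
  shows "received H idH SH u = received G rid S (\<pi> u)"
proof -
  let ?ns = "nbr_list H idH u"
  have n: "set ?ns = {w \<in> verts H. adj H u w}" "map \<pi> ?ns = nbr_list G rid (\<pi> u)"
    using nbrH[OF assms(1)] by auto
  have eq: "map (\<lambda>v. enc (message H idH v (snd (snd (SH v))) u) @ [Sep]) ?ns =
        map ((\<lambda>w. enc (message G rid w (snd (snd (S w))) (\<pi> u)) @ [Sep]) \<circ> \<pi>) ?ns"
  proof (rule map_cong[OF refl])
    fix v assume "v \<in> set ?ns"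
    then have v: "v \<in> verts H" "adj H u v" using n(1) by auto
    show "enc (message H idH v (snd (snd (SH v))) u) @ [Sep] =
        ((\<lambda>w. enc (message G rid w (snd (snd (S w))) (\<pi> u)) @ [Sep]) \<circ> \<pi>) v"
      using msg[OF v(1) assms(1) adj_sym[OF v(2)]] assms(2) v by simp
  qed
  show ?thesis by (simp only: received_def n(2)[symmetric] map_map eq)
qed

lemma nround: assumes "u \<in> verts H" "SH u = S (\<pi> u)" "\<forall>v\<in>verts H. adj H u v \<longrightarrow> SH v = S (\<pi> v)"
  shows "node_round M H idH SH u = node_round M G rid S (\<pi> u)"
  unfolding node_round_def round_cfg_def recv[OF assms(1,3)] assms(2) ..

lemma exec_sim: "exec M G rid \<kappa> k = Some S \<Longrightarrow>
  \<exists>SH. exec M H idH (\<lambda>u. \<kappa> (\<pi> u)) k = Some SH \<and> (\<forall>u\<in>verts H. SH u = S (\<pi> u))"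
proof (induction k arbitrary: S)
  case 0 then show ?case by (auto simp: init_state_def A3)
next
  case (Suc k)
  obtain S0 where S0: "exec M G rid \<kappa> k = Some S0" using Suc.prems by (cases "exec M G rid \<kappa> k") auto
  have c: "\<forall>g\<in>verts G. node_round M G rid S0 g \<noteq> None"
    and S: "S = (\<lambda>g. if g \<in> verts G then the (node_round M G rid S0 g) else S0 g)"
    using Suc.prems S0 by (auto split: if_splits)
  obtain SH0 where SH0: "exec M H idH (\<lambda>u. \<kappa> (\<pi> u)) k = Some SH0" "\<forall>u\<in>verts H. SH0 u = S0 (\<pi> u)"
    using Suc.IH[OF S0] by blast
  have nr: "node_round M H idH SH0 u = node_round M G rid S0 (\<pi> u)" if "u \<in> verts H" for u
    using nround[OF that] SH0(2) that by blast
  have "\<forall>u\<in>verts H. node_round M H idH SH0 u \<noteq> None" using nr c A1 by simp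
  then have "exec M H idH (\<lambda>u. \<kappa> (\<pi> u)) (Suc k) =
      Some (\<lambda>u. if u \<in> verts H then the (node_round M H idH SH0 u) else SH0 u)" using SH0(1) by simp
  moreover have "\<forall>u\<in>verts H. (\<lambda>u. if u \<in> verts H then the (node_round M H idH SH0 u) else SH0 u) u = S (\<pi> u)"
    using nr A1 S by simp
  ultimately show ?case by blast
qed

lemma accepts_sim: "accepts M G rid \<kappa> \<Longrightarrow> accepts M H idH (\<lambda>u. \<kappa> (\<pi> u))"
  unfolding accepts_def
proof (elim exE conjE)
  fix k S assume a: "exec M G rid \<kappa> k = Some S" "\<forall>u\<in>verts G. fst (S u)"
    "\<forall>u\<in>verts G. bits_of (content (fst (snd (S u)))) = [True]"
  obtain SH where "exec M H idH (\<lambda>u. \<kappa> (\<pi> u)) k = Some SH" "\<forall>u\<in>verts H. SH u = S (\<pi> u)"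
    using exec_sim[OF a(1)] by blast
  then show "\<exists>k S. exec M H idH (\<lambda>u. \<kappa> (\<pi> u)) k = Some S \<and> (\<forall>u\<in>verts H. fst (S u)) \<and>
        (\<forall>u\<in>verts H. bits_of (content (fst (snd (S u)))) = [True])"
    using a(2,3) A1 by (intro exI[of _ k] exI[of _ SH]) simp
qed

lemma lift: "walk G xs \<Longrightarrow> hd xs = \<pi> u \<Longrightarrow> u \<in> verts H \<Longrightarrow> \<exists>ys. walk H ys \<and> hd ys = u \<and> map \<pi> ys = xs"
proof (induction xs arbitrary: u rule: induct_list012)
  case 1 then show ?case by (simp add: walk_def)
next
  case (2 x) then show ?case by (intro exI[of _ "[u]"]) simp
next
  case (3 x y zs)
  have w: "adj G x y" "walk G (y # zs)" using 3(3) by (simp_all add: walk_Cons2)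
  have yv: "y \<in> verts G" using w(2) by (simp add: walk_def)
  have "y \<in> {w \<in> verts G. adj G (\<pi> u) w}" using w(1) 3(4) yv by simp
  then have "y \<in> \<pi> ` {v \<in> verts H. adj H u v}" using bij_betw_imp_surj_on[OF A2[OF 3(5)]] by simp
  then obtain v where v: "v \<in> verts H" "adj H u v" "\<pi> v = y" by blast
  have hv: "hd (y # zs) = \<pi> v" using v(3) by simp
  have ex: "\<exists>ys. walk H ys \<and> hd ys = v \<and> map \<pi> ys = y # zs" by (rule 3(2)[OF w(2) hv v(1)])
  from ex obtain ys where ys0: "walk H ys \<and> hd ys = v \<and> map \<pi> ys = y # zs" ..
  have ys: "walk H ys" "hd ys = v" "map \<pi> ys = y # zs" using ys0 by simp_all
  obtain rest where r: "ys = v # rest" using ys(2,3) by (cases ys) auto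
  have "walk H (u # v # rest)" unfolding walk_Cons2 using r ys(1) v(2) 3(5) by simp
  moreover have "map \<pi> (u # v # rest) = x # y # zs" using r ys(3) 3(4) by simp
  ultimately show ?case by (intro exI[of _ "u # v # rest"]) simp
qed

lemma ball_lift: assumes "u \<in> verts H" "g \<in> verts G" "dist_le G r (\<pi> u) g"
  shows "\<exists>v\<in>verts H. dist_le H r u v \<and> \<pi> v = g"
proof -
  obtain xs where xs: "walk G xs" "hd xs = \<pi> u" "last xs = g" "length xs \<le> Suc r"
    using assms(3) unfolding dist_le_def by blast
  obtain ys where ys: "walk H ys" "hd ys = u" "map \<pi> ys = xs" using lift[OF xs(1,2) assms(1)] by blast
  have ne: "ys \<noteq> []" using ys(1) by (simp add: walk_def)
  have "last ys \<in> verts H" using ys(1) ne by (auto simp: walk_def)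
  moreover have "\<pi> (last ys) = g" using ys(3) xs(3) ne by (metis last_map)
  moreover have "length ys \<le> Suc r" using ys(3) xs(4) by (metis length_map)
  then have "dist_le H r u (last ys)" unfolding dist_le_def using ys(1,2) by blast
  ultimately show ?thesis by blast
qed

end

lemma poly_mono_nat: "(x::nat) \<le> y \<Longrightarrow> poly p x \<le> poly p y"
proof (induction p rule: pCons_induct)
  case 0 then show ?case by simp
next
  case (pCons a p)
  have "x * poly p x \<le> y * poly p y" using pCons by (intro mult_mono) auto
  then show ?case by simp
qed

context cover begin

lemma bounded_sim: assumes "bounded_cert G rid r p \<kappa>"
  shows "bounded_cert H idH r p (\<lambda>u. \<kappa> (\<pi> u))"
  unfolding bounded_cert_def
proof
  fix u assume u: "u \<in> verts H"
  let ?w = "\<lambda>g. 1 + length (label G g) + length (rid g)"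
  let ?BG = "{v \<in> verts G. dist_le G r (\<pi> u) v}"
  let ?BH = "{v \<in> verts H. dist_le H r u v}"
  have fBH: "finite ?BH" using finH by simp
  have sub: "?BG \<subseteq> \<pi> ` ?BH"
  proof
    fix g assume "g \<in> ?BG"
    then obtain v where "v \<in> verts H" "dist_le H r u v" "\<pi> v = g" using ball_lift[OF u] by auto
    then show "g \<in> \<pi> ` ?BH" by auto
  qed
  have "sum ?w ?BG \<le> sum ?w (\<pi> ` ?BH)" using sub fBH by (intro sum_mono2) auto
  also have "\<dots> \<le> sum (?w \<circ> \<pi>) ?BH" using fBH by (intro sum_image_le) auto
  also have "\<dots> = (\<Sum>v\<in>?BH. 1 + length (label H v) + length (rid (\<pi> v)))"
    using A3 by (intro sum.cong) auto
  finally have le: "sum ?w ?BG \<le> (\<Sum>v\<in>?BH. 1 + length (label H v) + length (rid (\<pi> v)))" .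
  have "length (\<kappa> (\<pi> u)) \<le> poly p (sum ?w ?BG)" using assms A1[OF u] unfolding bounded_cert_def by blast
  also have "\<dots> \<le> poly p (\<Sum>v\<in>?BH. 1 + length (label H v) + length (rid (\<pi> v)))" using le by (rule poly_mono_nat)
  finally show "length (\<kappa> (\<pi> u)) \<le> poly p (\<Sum>v\<in>?BH. 1 + length (label H v) + length (rid (\<pi> v)))" .
qed

end

lemma cover_sqc: assumes "5 \<le> n" shows "cover (sqc n) (sqc (3*n)) (pr n)"
proof
  show "finite (verts (sqc n))" "finite (verts (sqc (3*n)))" by simp_all
  fix u assume u: "u \<in> verts (sqc (3*n))"
  then have u': "u < 3*n" by simp
  show "pr n u \<in> verts (sqc n)" using pr_lt[OF u'] by simp
  show "label (sqc (3*n)) u = label (sqc n) (pr n u)" by simp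
  have "{v \<in> verts (sqc (3*n)). adj (sqc (3*n)) u v} = nb (3*n) u" using assms u' by (intro nbrs_sqc) auto
  moreover have "{w \<in> verts (sqc n). adj (sqc n) (pr n u) w} = nb n (pr n u)"
    using assms pr_lt[OF u'] by (intro nbrs_sqc) auto
  ultimately show "bij_betw (pr n) {v \<in> verts (sqc (3*n)). adj (sqc (3*n)) u v} {w \<in> verts (sqc n). adj (sqc n) (pr n u) w}"
    using pr_bij[OF assms u'] by simp
qed

theorem corollary9p5:
  shows "NON_THREE_COLORABLE \<notin> NLP"
proof
  assume "NON_THREE_COLORABLE \<in> NLP"
  then obtain M r_id r p where h: "\<forall>G idf. is_graph G \<and> locally_unique G r_id idf \<longrightarrow>
       (G \<in> NON_THREE_COLORABLE \<longleftrightarrow> (\<exists>\<kappa>. bounded_cert G idf r p \<kappa> \<and> accepts M G idf \<kappa>))"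
    unfolding NLP_def by blast
  define k where "k = 4 * r_id + 2"
  define n where "n = 3 * k + 1"
  have n5: "5 \<le> n" and kk: "2 \<le> k" and small: "2 * (2 * r_id) < n" by (simp_all add: n_def k_def)
  have gG: "is_graph (sqc n)" using n5 by (rule is_graph_sqc)
  have gH: "is_graph (sqc (3*n))" using n5 by (intro is_graph_sqc) simp
  have inG: "sqc n \<in> NON_THREE_COLORABLE"
    unfolding NON_THREE_COLORABLE_def GRAPH_def using gG sqc_noncol[OF n_def kk] by simp
  have luG: "locally_unique (sqc n) r_id rid" unfolding locally_unique_def by simp
  obtain \<kappa> where \<kappa>: "bounded_cert (sqc n) rid r p \<kappa>" "accepts M (sqc n) rid \<kappa>"
    using h gG luG inG by blast
  interpret cv: cover "sqc n" "sqc (3*n)" "pr n" using cover_sqc[OF n5] .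
  have b: "bounded_cert (sqc (3*n)) (\<lambda>u. rid (pr n u)) r p (\<lambda>u. \<kappa> (pr n u))"
    using cv.bounded_sim[OF \<kappa>(1)] .
  have a: "accepts M (sqc (3*n)) (\<lambda>u. rid (pr n u)) (\<lambda>u. \<kappa> (pr n u))"
    using cv.accepts_sim[OF \<kappa>(2)] .
  have luH: "locally_unique (sqc (3*n)) r_id (\<lambda>u. rid (pr n u))"
    unfolding locally_unique_def
  proof (intro ballI impI)
    fix u v assume u: "u \<in> verts (sqc (3*n))" and v: "v \<in> verts (sqc (3*n))"
      and d: "u \<noteq> v \<and> dist_le (sqc (3*n)) (2 * r_id) u v"
    show "rid (pr n u) \<noteq> rid (pr n v)"
    proof
      assume "rid (pr n u) = rid (pr n v)"
      then have "pr n u = pr n v" by simp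
      then show False using sqc_H_unique[OF n5, of u v "2*r_id"] u v d small by simp
    qed
  qed
  have "sqc (3*n) \<in> NON_THREE_COLORABLE" using h gH luH b a by blast
  moreover have "sqc (3*n) \<in> THREE_COLORABLE" using n5 by (intro sqc3_col) simp
  ultimately show False unfolding NON_THREE_COLORABLE_def by simp
qed
end
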